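(* Let $K$ be an algebraic number field and $J\subseteq\mathcal O_K$ a nonzero ideal. Then the action of $\mathcal O_K^*$ on $\hat J$ has the ID property if and only if the action of $\mathcal O_K^*$ on $\widehat{\mathcal O_K}$ has the ID property.
   Context: $\mathcal O_K$ is the ring of integers of $K$, $\mathcal O_K^*$ its unit group. For a nonzero ideal $J$, $\hat J$ is the Pontryagin dual of the additive group $J$, with $\mathcal O_K^*$ acting by $(u\cdot\chi)(j)=\chi(uj)$. An action of a group $G$ on a compact space $X$ by homeomorphisms has the ID (infinite invariant dense) property if the only closed infinite $G$-invariant subset of $X$ is $X$ itself. *)

theory Defs
  imports "HOL-Analysis.Analysis" "HOL-Computational_Algebra.Polynomial"
begin

text \<open>An algebraic number field, realised (via an embedding) as a subfield of the
complex numbers which is a finite-dimensional vector space over the rationals.\<close>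
definition number_field :: "complex set \<Rightarrow> bool" where
  "number_field K \<longleftrightarrow>
     0 \<in> K \<and> 1 \<in> K \<and>
     (\<forall>x\<in>K. \<forall>y\<in>K. x + y \<in> K \<and> x * y \<in> K) \<and>
     (\<forall>x\<in>K. - x \<in> K \<and> inverse x \<in> K) \<and>
     (\<exists>B. finite B \<and> B \<subseteq> K \<and>
        (\<forall>x\<in>K. \<exists>c. (\<forall>b\<in>B. c b \<in> \<rat>) \<and> x = (\<Sum>b\<in>B. c b * b)))"

definition ring_of_integers :: "complex set \<Rightarrow> complex set" where
  "ring_of_integers K = {x \<in> K. algebraic_int x}"

definition int_units :: "complex set \<Rightarrow> complex set" where
  "int_units K = {u \<in> ring_of_integers K. \<exists>v \<in> ring_of_integers K. u * v = 1}"

definition is_ideal :: "complex set \<Rightarrow> complex set \<Rightarrow> bool" where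
  "is_ideal R J \<longleftrightarrow> J \<subseteq> R \<and> 0 \<in> J \<and>
     (\<forall>x\<in>J. \<forall>y\<in>J. x + y \<in> J) \<and> (\<forall>x\<in>J. - x \<in> J) \<and>
     (\<forall>r\<in>R. \<forall>x\<in>J. r * x \<in> J)"

text \<open>Pontryagin dual of the (discrete) additive group J: characters J \<rightarrow> unit circle,
extended by the value 1 outside J.  Its topology (compact-open = pointwise convergence,
J being discrete) is the subspace topology of the product topology on complex \<Rightarrow> complex.\<close>
definition dual_group :: "complex set \<Rightarrow> (complex \<Rightarrow> complex) set" where
  "dual_group J = {ch. (\<forall>x\<in>J. norm (ch x) = 1) \<and>
                        (\<forall>x\<in>J. \<forall>y\<in>J. ch (x + y) = ch x * ch y) \<and>
                        (\<forall>x. x \<notin> J \<longrightarrow> ch x = 1)}"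

definition dual_act :: "complex \<Rightarrow> (complex \<Rightarrow> complex) \<Rightarrow> (complex \<Rightarrow> complex)" where
  "dual_act u ch = (\<lambda>j. ch (u * j))"

definition ID_property ::
  "'b topology \<Rightarrow> 'g set \<Rightarrow> ('g \<Rightarrow> 'b \<Rightarrow> 'b) \<Rightarrow> bool" where
  "ID_property T G act \<longleftrightarrow>
     (\<forall>S. closedin T S \<and> infinite S \<and> (\<forall>g\<in>G. \<forall>x\<in>S. act g x \<in> S)
          \<longrightarrow> S = topspace T)"

end

theory Submission
  imports Defs "Jordan_Normal_Form.Char_Poly"
begin

lemma int_criterion:
  fixes x :: complex and g :: "nat \<Rightarrow> complex" and A :: "nat \<Rightarrow> nat \<Rightarrow> int"
  assumes "g i0 \<noteq> 0" "i0 < n"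
  and eq: "\<forall>i<n. x * g i = (\<Sum>j\<in>{0..<n}. of_int (A i j) * g j)"
  shows "algebraic_int x"
proof -
  define B :: "int mat" where "B = mat n n (\<lambda>(i,j). A i j)"
  have B: "B \<in> carrier_mat n n" by (simp add: B_def)
  define Bc :: "complex mat" where "Bc = of_int_hom.mat_hom B"
  have Bc: "Bc \<in> carrier_mat n n" using B by (simp add: Bc_def)
  define v where "v = vec n g"
  have "eigenvector Bc v x"
    unfolding eigenvector_def
  proof (intro conjI)
    show "v \<in> carrier_vec (dim_row Bc)" using Bc v_def by simp
    show "v \<noteq> 0\<^sub>v (dim_row Bc)"
    proof
      assume "v = 0\<^sub>v (dim_row Bc)"
      hence "vec_index v i0 = vec_index (0\<^sub>v n) i0" using Bc by simp
      thus False using assms(1,2) by (simp add: v_def)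
    qed
    show "Bc *\<^sub>v v = x \<cdot>\<^sub>v v"
    proof (rule eq_vecI)
      fix i assume "i < dim_vec (x \<cdot>\<^sub>v v)"
      hence i: "i < n" by (simp add: v_def)
      have "vec_index (Bc *\<^sub>v v) i = scalar_prod (row Bc i) v" using i Bc by simp
      also have "\<dots> = (\<Sum>j\<in>{0..<n}. vec_index (row Bc i) j * vec_index v j)"
        by (simp add: scalar_prod_def v_def)
      also have "\<dots> = (\<Sum>j\<in>{0..<n}. of_int (A i j) * g j)"
        using i by (intro sum.cong) (auto simp: Bc_def B_def v_def)
      also have "\<dots> = x * g i" using eq i by simp
      finally show "vec_index (Bc *\<^sub>v v) i = vec_index (x \<cdot>\<^sub>v v) i" using i by (simp add: v_def)
    qed (use Bc in \<open>auto simp: v_def\<close>)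
  qed
  then have "eigenvalue Bc x" by (auto simp: eigenvalue_def)
  hence "poly (char_poly Bc) x = 0" using eigenvalue_root_char_poly[OF Bc] by simp
  hence "poly (of_int_poly (char_poly B)) x = 0" unfolding Bc_def of_int_hom.char_poly_hom[OF B] .
  moreover have "monic (char_poly B)" using degree_monic_char_poly[OF B] by simp
  ultimately show ?thesis by (auto simp: algebraic_int_altdef_ipoly)
qed

lemma int_criterion2:
  fixes x :: complex and g :: "'i \<Rightarrow> complex"
  assumes I: "finite I" and i0: "i0 \<in> I" "g i0 \<noteq> 0"
    and ex: "\<forall>i\<in>I. \<exists>c. x * g i = (\<Sum>j\<in>I. of_int (c j) * g j)"
  shows "algebraic_int x"
proof -
  obtain h where h: "bij_betw h {0..<card I} I" using ex_bij_betw_nat_finite[OF I] by blast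
  define c where "c i = (SOME c. x * g (h i) = (\<Sum>j\<in>I. of_int (c j) * g j))" for i
  have c: "x * g (h i) = (\<Sum>j\<in>I. of_int (c i j) * g j)" if "i < card I" for i
  proof -
    have "h i \<in> I" using h that bij_betwE by fastforce
    hence "\<exists>c. x * g (h i) = (\<Sum>j\<in>I. of_int (c j) * g j)" using ex by blast
    thus ?thesis unfolding c_def by (rule someI_ex)
  qed
  have "h ` {0..<card I} = I" using h by (simp add: bij_betw_def)
  hence "i0 \<in> h ` {0..<card I}" using i0 by simp
  then obtain k0 where k0': "k0 \<in> {0..<card I}" "i0 = h k0" by (rule imageE)
  hence k0: "k0 < card I" "h k0 = i0" by simp_all
  show ?thesis
  proof (rule int_criterion[of "g \<circ> h" k0 "card I" x "\<lambda>i j. c i (h j)"])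
    show "(g \<circ> h) k0 \<noteq> 0" using k0 i0 by simp
    show "k0 < card I" by fact
    show "\<forall>i<card I. x * (g \<circ> h) i = (\<Sum>j = 0..<card I. of_int (c i (h j)) * (g \<circ> h) j)"
    proof (intro allI impI)
      fix i assume "i < card I"
      hence "x * (g \<circ> h) i = (\<Sum>j\<in>I. of_int (c i j) * g j)" using c by simp
      also have "\<dots> = (\<Sum>j = 0..<card I. of_int (c i (h j)) * (g \<circ> h) j)"
        using sum.reindex_bij_betw[OF h, of "\<lambda>j. of_int (c i j) * g j"] by simp
      finally show "x * (g \<circ> h) i = (\<Sum>j = 0..<card I. of_int (c i (h j)) * (g \<circ> h) j)" .
    qed
  qed
qed

lemma shift_lemma:
  fixes p :: "int poly" and x :: complex
  assumes "monic p" "poly (of_int_poly p) x = 0" "i < degree p"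
  shows "\<exists>c::nat\<Rightarrow>int. x * x ^ i = (\<Sum>k<degree p. of_int (c k) * x ^ k)"
proof (cases "Suc i < degree p")
  case True
  have "(\<Sum>k<degree p. of_int (if k = Suc i then 1 else 0) * x ^ k) = (\<Sum>k<degree p. if k = Suc i then x ^ k else 0)"
    by (rule sum.cong) auto
  also have "\<dots> = x ^ Suc i" using True by simp
  finally have "(\<Sum>k<degree p. of_int (if k = Suc i then 1 else 0) * x ^ k) = x * x ^ i" by simp
  thus ?thesis by (intro exI[of _ "\<lambda>k. if k = Suc i then 1 else 0"]) simp
next
  case False
  hence m: "degree p = Suc i" using assms(3) by simp
  have "0 = (\<Sum>k\<le>degree p. of_int (coeff p k) * x ^ k)"
    using assms(2) by (simp add: poly_altdef)
  also have "\<dots> = (\<Sum>k<degree p. of_int (coeff p k) * x ^ k) + x ^ degree p"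
    using assms(1) by (simp add: lessThan_Suc_atMost[symmetric] m)
  finally have "x ^ degree p = - (\<Sum>k<degree p. of_int (coeff p k) * x ^ k)"
    by (simp add: eq_neg_iff_add_eq_0 add.commute)
  also have "\<dots> = (\<Sum>k<degree p. of_int (- coeff p k) * x ^ k)" by (simp add: sum_negf)
  finally have "x * x ^ i = (\<Sum>k<degree p. of_int (- coeff p k) * x ^ k)" by (simp add: m)
  thus ?thesis by (intro exI[of _ "\<lambda>k. - coeff p k"])
qed

definition zspan :: "'i set \<Rightarrow> ('i \<Rightarrow> complex) \<Rightarrow> complex set" where
  "zspan I g = {s. \<exists>c. s = (\<Sum>j\<in>I. of_int (c j) * g j)}"

lemma zspan_add: "s \<in> zspan I g \<Longrightarrow> t \<in> zspan I g \<Longrightarrow> s + t \<in> zspan I g"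
proof -
  assume "s \<in> zspan I g" "t \<in> zspan I g"
  then obtain c d where "s = (\<Sum>j\<in>I. of_int (c j) * g j)" "t = (\<Sum>j\<in>I. of_int (d j) * g j)"
    unfolding zspan_def by blast
  hence "s + t = (\<Sum>j\<in>I. of_int (c j + d j) * g j)" by (simp add: distrib_right sum.distrib)
  thus ?thesis unfolding zspan_def mem_Collect_eq by (rule exI[of _ "\<lambda>j. c j + d j"])
qed

lemma zspan_scale: "s \<in> zspan I g \<Longrightarrow> of_int k * s \<in> zspan I g"
proof -
  assume "s \<in> zspan I g"
  then obtain c where "s = (\<Sum>j\<in>I. of_int (c j) * g j)" unfolding zspan_def by blast
  hence "of_int k * s = (\<Sum>j\<in>I. of_int (k * c j) * g j)" by (simp add: sum_distrib_left mult.assoc)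
  thus ?thesis unfolding zspan_def mem_Collect_eq by (rule exI[of _ "\<lambda>j. k * c j"])
qed

lemma zspan_0: "0 \<in> zspan I g"
  unfolding zspan_def by (intro CollectI exI[of _ "\<lambda>_. 0"]) simp

lemma zspan_sum: "finite A \<Longrightarrow> (\<forall>j\<in>A. f j \<in> zspan I g) \<Longrightarrow> (\<Sum>j\<in>A. f j) \<in> zspan I g"
  by (induction A rule: finite_induct) (auto simp: zspan_0 zspan_add)

lemma zspan_mul:
  assumes "finite I" "\<forall>k\<in>I. x * g k \<in> zspan I g"
  shows "s \<in> zspan I g \<Longrightarrow> x * s \<in> zspan I g"
proof -
  assume "s \<in> zspan I g"
  then obtain c where "s = (\<Sum>j\<in>I. of_int (c j) * g j)" unfolding zspan_def by blast
  hence "x * s = (\<Sum>j\<in>I. of_int (c j) * (x * g j))" by (simp add: sum_distrib_left mult.left_commute)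
  also have "\<dots> \<in> zspan I g" using assms by (intro zspan_sum zspan_scale ballI) auto
  finally show ?thesis .
qed

lemma sum_single:
  fixes f :: "'b \<Rightarrow> complex"
  assumes "j \<in> A" "finite A"
  shows "(\<Sum>b\<in>A. of_int (if b = j then c else 0) * f b) = of_int c * f j"
proof -
  have "(\<Sum>b\<in>A. of_int (if b = j then c else 0) * f b) = (\<Sum>b\<in>A. if b = j then of_int c * f b else 0)"
    by (rule sum.cong) auto
  thus ?thesis using assms by simp
qed

lemma monic_root_degree_pos:
  fixes p :: "int poly" and x :: complex
  assumes "monic p" "poly (of_int_poly p) x = 0"
  shows "degree p > 0"
proof (rule ccontr)
  assume "\<not> degree p > 0"
  hence "degree p = 0" by simp
  hence "p = [:coeff p 0:]" using degree_0_id[of p] by simp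
  hence "p = [:1:]" using assms(1) \<open>\<not> degree p > 0\<close> by simp
  thus False using assms(2) by simp
qed

lemma algebraic_int_module:
  fixes x y :: complex
  assumes "algebraic_int x" "algebraic_int y"
  shows "\<exists>(I::(nat\<times>nat) set) g i0. finite I \<and> i0 \<in> I \<and> g i0 \<noteq> 0 \<and> (\<forall>k\<in>I. x * g k \<in> zspan I g) \<and> (\<forall>k\<in>I. y * g k \<in> zspan I g)"
proof -
  obtain p where p: "poly (of_int_poly p) x = 0" "monic p" using assms(1) by (auto simp: algebraic_int_altdef_ipoly)
  obtain q where q: "poly (of_int_poly q) y = 0" "monic q" using assms(2) by (auto simp: algebraic_int_altdef_ipoly)
  define m where "m = degree p"
  define n where "n = degree q"
  have m0: "m > 0" using monic_root_degree_pos[OF p(2,1)] m_def by simp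
  have n0: "n > 0" using monic_root_degree_pos[OF q(2,1)] n_def by simp
  define I where "I = {..<m} \<times> {..<n}"
  define g where "g = (\<lambda>(i,j). x ^ i * y ^ j)"
  have fI: "finite I" by (simp add: I_def)
  have X: "\<exists>c. x * g k = (\<Sum>j\<in>I. of_int (c j) * g j)" if kI: "k \<in> I" for k
  proof -
    obtain i j where k: "k = (i,j)" "i < m" "j < n" using kI unfolding I_def by blast
    obtain c where c: "x * x ^ i = (\<Sum>k<m. of_int (c k) * x ^ k)"
      using shift_lemma[OF p(2) p(1), of i] k m_def by auto
    have "x * g k = (\<Sum>k<m. of_int (c k) * x ^ k) * y ^ j" using c k by (simp add: g_def mult.assoc)
    also have "\<dots> = (\<Sum>a<m. of_int (c a) * (x ^ a * y ^ j))" by (simp add: sum_distrib_right mult.assoc)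
    also have "\<dots> = (\<Sum>a<m. \<Sum>b<n. of_int (if b = j then c a else 0) * (x ^ a * y ^ b))"
      using k by (intro sum.cong refl) (simp add: sum_single)
    also have "\<dots> = (\<Sum>(a,b)\<in>I. of_int (if b = j then c a else 0) * g (a,b))"
      unfolding I_def g_def by (simp add: sum.cartesian_product)
    finally show ?thesis by (intro exI[of _ "\<lambda>(a,b). if b = j then c a else 0"]) (simp add: case_prod_unfold)
  qed
  have Y: "\<exists>c. y * g k = (\<Sum>j\<in>I. of_int (c j) * g j)" if kI: "k \<in> I" for k
  proof -
    obtain i j where k: "k = (i,j)" "i < m" "j < n" using kI unfolding I_def by blast
    obtain c where c: "y * y ^ j = (\<Sum>k<n. of_int (c k) * y ^ k)"
      using shift_lemma[OF q(2) q(1), of j] k n_def by auto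
    have "y * g k = x ^ i * (\<Sum>k<n. of_int (c k) * y ^ k)" using c k by (simp add: g_def mult.left_commute)
    also have "\<dots> = (\<Sum>b<n. of_int (c b) * (x ^ i * y ^ b))" by (simp add: sum_distrib_left mult.left_commute)
    also have "\<dots> = (\<Sum>b<n. \<Sum>a<m. of_int (if a = i then c b else 0) * (x ^ a * y ^ b))"
      using k by (intro sum.cong refl) (simp add: sum_single[of i "{..<m}" _ "\<lambda>a. x ^ a * y ^ _", simplified])
    also have "\<dots> = (\<Sum>a<m. \<Sum>b<n. of_int (if a = i then c b else 0) * (x ^ a * y ^ b))"
      by (rule sum.swap)
    also have "\<dots> = (\<Sum>(a,b)\<in>I. of_int (if a = i then c b else 0) * g (a,b))"
      unfolding I_def g_def by (simp add: sum.cartesian_product)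
    finally show ?thesis by (intro exI[of _ "\<lambda>(a,b). if a = i then c b else 0"]) (simp add: case_prod_unfold)
  qed
  have "(0,0) \<in> I" using m0 n0 by (simp add: I_def)
  moreover have "g (0,0) \<noteq> 0" by (simp add: g_def)
  moreover have "\<forall>k\<in>I. x * g k \<in> zspan I g" "\<forall>k\<in>I. y * g k \<in> zspan I g"
    using X Y unfolding zspan_def by blast+
  ultimately show ?thesis using fI by blast
qed

lemma algebraic_int_plus:
  fixes x y :: complex
  assumes "algebraic_int x" "algebraic_int y"
  shows "algebraic_int (x + y)"
proof -
  obtain I :: "(nat\<times>nat) set" and g i0 where I: "finite I" "i0 \<in> I" "g i0 \<noteq> 0"
    and X: "\<forall>k\<in>I. x * g k \<in> zspan I g" and Y: "\<forall>k\<in>I. y * g k \<in> zspan I g"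
    using algebraic_int_module[OF assms] by blast
  have "\<forall>k\<in>I. (x + y) * g k \<in> zspan I g"
  proof
    fix k assume k: "k \<in> I"
    show "(x + y) * g k \<in> zspan I g"
      using zspan_add[OF X[rule_format, OF k] Y[rule_format, OF k]] by (simp add: distrib_right)
  qed
  thus ?thesis using int_criterion2[of I i0 g] I unfolding zspan_def by blast
qed

lemma algebraic_int_times:
  fixes x y :: complex
  assumes "algebraic_int x" "algebraic_int y"
  shows "algebraic_int (x * y)"
proof -
  obtain I :: "(nat\<times>nat) set" and g i0 where I: "finite I" "i0 \<in> I" "g i0 \<noteq> 0"
    and X: "\<forall>k\<in>I. x * g k \<in> zspan I g" and Y: "\<forall>k\<in>I. y * g k \<in> zspan I g"
    using algebraic_int_module[OF assms] by blast
  have "\<forall>k\<in>I. (x * y) * g k \<in> zspan I g" using X Y zspan_mul[OF I(1) X] by (simp add: mult.assoc)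
  thus ?thesis using int_criterion2[of I i0 g] I unfolding zspan_def by blast
qed


definition subgrp :: "complex set \<Rightarrow> bool" where
  "subgrp A \<longleftrightarrow> 0 \<in> A \<and> (\<forall>x\<in>A. \<forall>y\<in>A. x + y \<in> A) \<and> (\<forall>x\<in>A. -x \<in> A)"

definition is_char :: "complex set \<Rightarrow> (complex \<Rightarrow> complex) \<Rightarrow> bool" where
  "is_char A f \<longleftrightarrow> (\<forall>x\<in>A. norm (f x) = 1) \<and> (\<forall>x\<in>A. \<forall>y\<in>A. f (x + y) = f x * f y)"

lemma subgrp_nat_mult: "subgrp A \<Longrightarrow> x \<in> A \<Longrightarrow> of_nat n * x \<in> A"
  by (induction n) (auto simp: subgrp_def distrib_right)

lemma subgrp_int_mult: assumes "subgrp A" "x \<in> A" shows "of_int k * x \<in> A"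
proof (cases "k \<ge> 0")
  case True
  hence "k = int (nat k)" by simp
  hence "of_int k * x = of_nat (nat k) * x" by (metis of_int_of_nat_eq)
  thus ?thesis using subgrp_nat_mult[OF assms, of "nat k"] by (simp only:)
next
  case False
  hence "k = - int (nat (-k))" by simp
  hence "of_int k * x = - (of_nat (nat (-k)) * x)" by (metis mult_minus_left of_int_minus of_int_of_nat_eq)
  moreover have "of_nat (nat (-k)) * x \<in> A" using subgrp_nat_mult[OF assms] .
  ultimately show ?thesis using assms(1) unfolding subgrp_def by simp
qed

lemma char_0: assumes "subgrp A" "is_char A f" shows "f 0 = 1"
proof -
  have A0: "0 \<in> A" using assms(1) unfolding subgrp_def by blast
  have "f (0 + 0) = f 0 * f 0" using assms(2) A0 unfolding is_char_def by blast
  hence e: "f 0 * f 0 = f 0 * 1" by simp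
  have "norm (f 0) = 1" using assms(2) A0 unfolding is_char_def by blast
  hence "f 0 \<noteq> 0" by auto
  thus ?thesis using e mult_left_cancel by blast
qed

lemma char_neg: assumes "subgrp A" "is_char A f" "x \<in> A" shows "f (-x) = inverse (f x)"
proof -
  have "-x \<in> A" using assms(1,3) unfolding subgrp_def by blast
  hence "f (x + - x) = f x * f (-x)" using assms(2,3) unfolding is_char_def by blast
  hence "f x * f (-x) = 1" using char_0[OF assms(1,2)] by simp
  thus ?thesis by (rule inverse_unique[symmetric])
qed

lemma char_nat_mult: assumes "subgrp A" "is_char A f" "x \<in> A" shows "f (of_nat n * x) = f x ^ n"
proof (induction n)
  case 0 then show ?case using char_0[OF assms(1,2)] by simp
next
  case (Suc n)
  have "f (of_nat (Suc n) * x) = f (x + of_nat n * x)" by (simp add: distrib_right)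
  also have "\<dots> = f x * f (of_nat n * x)" using assms subgrp_nat_mult[OF assms(1,3)] by (simp add: is_char_def)
  finally show ?case using Suc by simp
qed

lemma char_int_mult: assumes "subgrp A" "is_char A f" "x \<in> A" shows "f (of_int k * x) = f x powi k"
proof (cases "k \<ge> 0")
  case True
  define n where "n = nat k"
  have k: "k = int n" using True by (simp add: n_def)
  have "f (of_int k * x) = f (of_nat n * x)" using k by simp
  also have "\<dots> = f x ^ n" by (rule char_nat_mult[OF assms])
  also have "\<dots> = f x powi k" using k by (simp only: power_int_of_nat)
  finally show ?thesis .
next
  case False
  define n where "n = nat (-k)"
  have k: "k = - int n" using False by (simp add: n_def)
  have "f (of_int k * x) = f (- (of_nat n * x))" using k by simp
  also have "\<dots> = inverse (f (of_nat n * x))" by (rule char_neg[OF assms(1,2) subgrp_nat_mult[OF assms(1,3)]])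
  also have "\<dots> = inverse (f x ^ n)" by (simp only: char_nat_mult[OF assms])
  also have "\<dots> = f x powi k" using k by (simp only: power_int_minus power_int_of_nat)
  finally show ?thesis .
qed

lemma ext_step:
  assumes D: "subgrp D" and psi: "is_char D \<psi>"
  shows "\<exists>z. norm z = 1 \<and> (\<forall>k::int. of_int k * g \<in> D \<longrightarrow> \<psi> (of_int k * g) = z powi k)"
proof (cases "\<exists>k. k \<noteq> 0 \<and> of_int k * g \<in> D")
  case False
  show ?thesis
  proof (intro exI[of _ 1] conjI allI impI)
    fix k assume "of_int k * g \<in> D"
    with False have "k = 0" by blast
    thus "\<psi> (of_int k * g) = 1 powi k" by (simp add: char_0[OF D psi])
  qed simp
next
  case True
  then obtain k1 where k1: "k1 \<noteq> 0" "of_int k1 * g \<in> D" by blast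
  have ex: "\<exists>n::nat. n > 0 \<and> of_nat n * g \<in> D"
  proof (cases "k1 > 0")
    case True
    thus ?thesis using k1 by (intro exI[of _ "nat k1"]) auto
  next
    case False
    have "of_int (-k1) * g \<in> D" using k1 D by (simp add: subgrp_def)
    thus ?thesis using False k1 by (intro exI[of _ "nat (-k1)"]) auto
  qed
  define n0 where "n0 = (LEAST n::nat. n > 0 \<and> of_nat n * g \<in> D)"
  have n0: "n0 > 0" "of_nat n0 * g \<in> D"
    using LeastI_ex[OF ex] unfolding n0_def by auto
  have n0min: "\<not> (n > 0 \<and> of_nat n * g \<in> D)" if "n < n0" for n
    using not_less_Least[of n "\<lambda>n. n > 0 \<and> of_nat n * g \<in> D"] that unfolding n0_def by blast
  define w where "w = \<psi> (of_nat n0 * g)"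
  have nw: "norm w = 1" using psi n0 by (simp add: is_char_def w_def)
  define z where "z = cis (Arg w / real n0)"
  have nz: "norm z = 1" by (simp add: z_def)
  have zw: "z ^ n0 = w"
  proof -
    have "z ^ n0 = cis (real n0 * (Arg w / real n0))" unfolding z_def by (rule Complex.DeMoivre)
    also have "\<dots> = cis (Arg w)" using n0 by simp
    also have "\<dots> = sgn w" using nw by (intro cis_Arg) auto
    also have "\<dots> = w" using nw by (simp add: sgn_div_norm)
    finally show ?thesis .
  qed
  show ?thesis
  proof (intro exI[of _ z] conjI allI impI)
    show "norm z = 1" by fact
    fix k assume k: "of_int k * g \<in> D"
    define j where "j = k div int n0"
    define r where "r = k mod int n0"
    have kr: "k = j * int n0 + r" by (simp add: j_def r_def)
    have r0: "0 \<le> r" "r < int n0" using n0 by (auto simp: r_def)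
    have "of_int r * g = of_int k * g + - (of_int j * (of_nat n0 * g))" using kr by (simp add: algebra_simps)
    moreover have "of_int j * (of_nat n0 * g) \<in> D" using subgrp_int_mult[OF D n0(2)] .
    moreover have "- (of_int j * (of_nat n0 * g)) \<in> D" using D \<open>of_int j * (of_nat n0 * g) \<in> D\<close> unfolding subgrp_def by blast
    hence "of_int k * g + - (of_int j * (of_nat n0 * g)) \<in> D" using D k unfolding subgrp_def by blast
    ultimately have "of_int r * g \<in> D" by simp
    hence "of_nat (nat r) * g \<in> D" using r0 by simp
    hence "r = 0" using n0min[of "nat r"] r0 by linarith
    hence kj: "k = j * int n0" using kr by simp
    have "\<psi> (of_int k * g) = \<psi> (of_int j * (of_nat n0 * g))" by (simp add: kj mult.assoc)
    also have "\<dots> = w powi j" by (simp only: w_def char_int_mult[OF D psi n0(2)])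
    also have "\<dots> = (z powi int n0) powi j" by (simp only: power_int_of_nat zw)
    also have "\<dots> = z powi k" by (simp only: kj mult.commute[of j "int n0"] power_int_mult)
    finally show "\<psi> (of_int k * g) = z powi k" .
  qed
qed

lemma char_extend:
  assumes G: "subgrp G" and H: "subgrp H" and HG: "H \<subseteq> G" and chi: "is_char H ch"
  shows "\<exists>\<psi>. is_char G \<psi> \<and> (\<forall>x\<in>H. \<psi> x = ch x)"
proof -
  define P :: "(complex \<times> complex) set set" where
    "P = {F. single_valued F \<and> (\<forall>x\<in>H. (x, ch x) \<in> F) \<and> Domain F \<subseteq> G \<and>
             (\<forall>p\<in>F. norm (snd p) = 1) \<and> (\<forall>p\<in>F. \<forall>q\<in>F. (fst p + fst q, snd p * snd q) \<in> F) \<and>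
             (\<forall>x\<in>Domain F. -x \<in> Domain F)}"
  have "\<exists>M\<in>P. \<forall>X\<in>P. M \<subseteq> X \<longrightarrow> X = M"
  proof (rule Zorn_Lemma2, intro ballI)
    fix C assume C: "C \<in> chains P"
    hence CP: "C \<subseteq> P" and ch: "\<forall>F\<in>C. \<forall>F'\<in>C. F \<subseteq> F' \<or> F' \<subseteq> F"
      by (auto simp: chains_def chain_subset_def)
    show "\<exists>U\<in>P. \<forall>X\<in>C. X \<subseteq> U"
    proof (cases "C = {}")
      case True
      have "{(x, ch x) | x. x \<in> H} \<in> P"
        using H HG chi unfolding P_def single_valued_def subgrp_def is_char_def by auto
      thus ?thesis using True by blast
    next
      case False
      have "\<Union>C \<in> P"
        unfolding P_def
      proof (intro CollectI conjI)
        show "single_valued (\<Union>C)" unfolding single_valued_def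
        proof (intro allI impI)
          fix x y z assume "(x, y) \<in> \<Union>C" "(x, z) \<in> \<Union>C"
          then obtain F1 F2 where "F1 \<in> C" "F2 \<in> C" "(x,y) \<in> F1" "(x,z) \<in> F2" by blast
          then obtain F where F: "F \<in> C" "(x,y) \<in> F" "(x,z) \<in> F" using ch by blast
          hence "single_valued F" using CP unfolding P_def by blast
          thus "y = z" using F single_valuedD by metis
        qed
        show "\<forall>x\<in>H. (x, ch x) \<in> \<Union>C"
        proof
          fix x assume x: "x \<in> H"
          obtain F where F: "F \<in> C" using False by blast
          have "\<forall>x\<in>H. (x, ch x) \<in> F" using CP F unfolding P_def by blast
          thus "(x, ch x) \<in> \<Union>C" using F x by blast
        qed
        show "Domain (\<Union>C) \<subseteq> G"
        proof
          fix x assume "x \<in> Domain (\<Union>C)"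
          then obtain F y where F: "F \<in> C" "(x, y) \<in> F" by blast
          have "Domain F \<subseteq> G" using CP F(1) unfolding P_def by blast
          thus "x \<in> G" using F(2) by blast
        qed
        show "\<forall>p\<in>\<Union>C. norm (snd p) = 1"
        proof
          fix p assume "p \<in> \<Union>C"
          then obtain F where F: "F \<in> C" "p \<in> F" by blast
          have "\<forall>p\<in>F. norm (snd p) = 1" using CP F(1) unfolding P_def by blast
          thus "norm (snd p) = 1" using F(2) by blast
        qed
        show "\<forall>p\<in>\<Union>C. \<forall>q\<in>\<Union>C. (fst p + fst q, snd p * snd q) \<in> \<Union>C"
        proof (intro ballI)
          fix p q assume "p \<in> \<Union>C" "q \<in> \<Union>C"
          then obtain F1 F2 where "F1 \<in> C" "F2 \<in> C" "p \<in> F1" "q \<in> F2" by blast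
          then obtain F where F: "F \<in> C" "p \<in> F" "q \<in> F" using ch by blast
          hence "(fst p + fst q, snd p * snd q) \<in> F" using CP unfolding P_def by blast
          thus "(fst p + fst q, snd p * snd q) \<in> \<Union>C" using F by blast
        qed
        show "\<forall>x\<in>Domain (\<Union>C). - x \<in> Domain (\<Union>C)"
        proof
          fix x assume "x \<in> Domain (\<Union>C)"
          then obtain F y where F: "F \<in> C" "(x, y) \<in> F" by blast
          have "\<forall>x\<in>Domain F. - x \<in> Domain F" using CP F(1) unfolding P_def by blast
          hence "-x \<in> Domain F" using F(2) by blast
          thus "-x \<in> Domain (\<Union>C)" using F(1) by blast
        qed
      qed
      thus ?thesis by blast
    qed
  qed
  then obtain M where MP: "M \<in> P" and Mmax: "\<forall>X\<in>P. M \<subseteq> X \<longrightarrow> X = M" by blast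
  define D where "D = Domain M"
  define \<psi> where "\<psi> x = (SOME w. (x, w) \<in> M)" for x
  have sv: "single_valued M" and MH: "\<forall>x\<in>H. (x, ch x) \<in> M" and MG: "Domain M \<subseteq> G"
    and Mnorm: "\<forall>p\<in>M. norm (snd p) = 1" and Mcl: "\<forall>p\<in>M. \<forall>q\<in>M. (fst p + fst q, snd p * snd q) \<in> M"
    and Mneg: "\<forall>x\<in>Domain M. -x \<in> Domain M"
    using MP unfolding P_def mem_Collect_eq by blast+
  have psiM: "(x, \<psi> x) \<in> M" if "x \<in> D" for x
    using that unfolding D_def \<psi>_def by (meson DomainE someI)
  have psi_eq: "\<psi> x = w" if "(x, w) \<in> M" for x w
    using psiM[of x] that sv unfolding D_def single_valued_def by blast
  have HD: "H \<subseteq> D" using MH unfolding D_def by blast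
  have D: "subgrp D"
    unfolding subgrp_def
  proof (intro conjI ballI)
    show "0 \<in> D" using HD H by (auto simp: subgrp_def)
    fix x assume x: "x \<in> D"
    show "-x \<in> D" using Mneg x unfolding D_def by blast
    fix y assume y: "y \<in> D"
    have "(x + y, \<psi> x * \<psi> y) \<in> M" using Mcl[rule_format, OF psiM[OF x] psiM[OF y]] by simp
    thus "x + y \<in> D" unfolding D_def by blast
  qed
  have psi: "is_char D \<psi>"
    unfolding is_char_def
  proof (intro conjI ballI)
    fix x assume x: "x \<in> D"
    show "norm (\<psi> x) = 1" using Mnorm psiM[OF x] by fastforce
    fix y assume y: "y \<in> D"
    have "(x + y, \<psi> x * \<psi> y) \<in> M" using Mcl[rule_format, OF psiM[OF x] psiM[OF y]] by simp
    thus "\<psi> (x + y) = \<psi> x * \<psi> y" by (rule psi_eq)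
  qed
  have DG: "D \<subseteq> G" using MG unfolding D_def by blast
  have "G \<subseteq> D"
  proof
    fix g assume g: "g \<in> G"
    show "g \<in> D"
    proof (rule ccontr)
      assume gD: "g \<notin> D"
      obtain z where nz: "norm z = 1" and zk: "\<forall>k::int. of_int k * g \<in> D \<longrightarrow> \<psi> (of_int k * g) = z powi k"
        using ext_step[OF D psi] by blast
      have z0: "z \<noteq> 0" using nz by auto
      define F where "F = {(d + of_int k * g, w * z powi k) | d w k. (d, w) \<in> M}"
      have MF: "M \<subseteq> F"
      proof (rule subsetI)
        fix p assume p: "p \<in> M"
        obtain d w where dw: "p = (d, w)" by (cases p)
        have "(d + of_int 0 * g, w * z powi 0) \<in> F" unfolding F_def using p dw by blast
        thus "p \<in> F" using dw by simp
      qed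
      have gF: "g \<in> Domain F"
      proof -
        have "0 \<in> D" using D by (simp add: subgrp_def)
        hence "(0, \<psi> 0) \<in> M" by (rule psiM)
        hence "(0 + of_int 1 * g, \<psi> 0 * z powi 1) \<in> F" unfolding F_def by blast
        hence "0 + of_int 1 * g \<in> Domain F" by (rule DomainI)
        thus ?thesis by simp
      qed
      have "F \<in> P"
        unfolding P_def
      proof (intro CollectI conjI)
        show "single_valued F" unfolding single_valued_def
        proof (intro allI impI)
          fix x y y' assume "(x, y) \<in> F" "(x, y') \<in> F"
          then obtain d1 w1 k1 d2 w2 k2 where
            e: "x = d1 + of_int k1 * g" "y = w1 * z powi k1" "(d1, w1) \<in> M"
               "x = d2 + of_int k2 * g" "y' = w2 * z powi k2" "(d2, w2) \<in> M"
            unfolding F_def by blast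
          have d1: "d1 \<in> D" and d2: "d2 \<in> D" using e unfolding D_def by auto
          have dd: "d2 + - d1 = of_int (k1 - k2) * g" using e by (simp add: algebra_simps)
          have "d2 + - d1 \<in> D" using D d1 d2 unfolding subgrp_def by blast
          hence "of_int (k1 - k2) * g \<in> D" using dd by simp
          hence "\<psi> (of_int (k1 - k2) * g) = z powi (k1 - k2)" using zk by blast
          hence "\<psi> (d2 + - d1) = z powi (k1 - k2)" using dd by metis
          moreover have "w2 = \<psi> (d1 + (d2 + - d1))" using psi_eq[OF e(6)] by simp
          moreover have "\<psi> (d1 + (d2 + - d1)) = \<psi> d1 * \<psi> (d2 + - d1)"
            using psi d1 \<open>d2 + - d1 \<in> D\<close> unfolding is_char_def by blast
          ultimately have "w2 = w1 * z powi (k1 - k2)" using psi_eq[OF e(3)] by simp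
          hence "y' = w1 * (z powi (k1 - k2) * z powi k2)" using e by (simp add: mult.assoc)
          also have "z powi (k1 - k2) * z powi k2 = z powi k1"
            using z0 by (simp flip: power_int_add)
          finally show "y = y'" using e by simp
        qed
        show "\<forall>x\<in>H. (x, ch x) \<in> F" using MF MH by blast
        show "Domain F \<subseteq> G"
        proof
          fix x assume "x \<in> Domain F"
          then obtain d w k where "x = d + of_int k * g" "(d, w) \<in> M" unfolding F_def by blast
          moreover have "of_int k * g \<in> G" using subgrp_int_mult[OF G g] .
          ultimately show "x \<in> G" using G DG unfolding D_def subgrp_def by blast
        qed
        show "\<forall>p\<in>F. norm (snd p) = 1"
        proof
          fix p assume "p \<in> F"
          then obtain d w k where "p = (d + of_int k * g, w * z powi k)" "(d, w) \<in> M" unfolding F_def by blast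
          moreover have "norm w = 1" using Mnorm \<open>(d, w) \<in> M\<close> by fastforce
          ultimately show "norm (snd p) = 1" using nz by (simp add: norm_mult norm_power_int)
        qed
        show "\<forall>p\<in>F. \<forall>q\<in>F. (fst p + fst q, snd p * snd q) \<in> F"
        proof (intro ballI)
          fix p q assume "p \<in> F" "q \<in> F"
          then obtain d1 w1 k1 d2 w2 k2 where
            e: "p = (d1 + of_int k1 * g, w1 * z powi k1)" "(d1, w1) \<in> M"
               "q = (d2 + of_int k2 * g, w2 * z powi k2)" "(d2, w2) \<in> M"
            unfolding F_def by blast
          have "(d1 + d2, w1 * w2) \<in> M" using Mcl[rule_format, OF e(2) e(4)] by simp
          moreover have "fst p + fst q = (d1 + d2) + of_int (k1 + k2) * g" using e by (simp add: algebra_simps)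
          moreover have "snd p * snd q = (w1 * w2) * z powi (k1 + k2)" using e z0
            by (simp add: power_int_add algebra_simps)
          ultimately show "(fst p + fst q, snd p * snd q) \<in> F" unfolding F_def by blast
        qed
        show "\<forall>x\<in>Domain F. - x \<in> Domain F"
        proof
          fix x assume "x \<in> Domain F"
          then obtain d w k where "x = d + of_int k * g" "(d, w) \<in> M" unfolding F_def by blast
          moreover have "-d \<in> D" using D \<open>(d, w) \<in> M\<close> unfolding subgrp_def D_def by blast
          ultimately have "(-d, \<psi> (-d)) \<in> M" "-x = -d + of_int (-k) * g" using psiM by auto
          hence "(-d + of_int (-k) * g, \<psi> (-d) * z powi (-k)) \<in> F" unfolding F_def by blast
          hence "-d + of_int (-k) * g \<in> Domain F" by (rule DomainI)
          thus "-x \<in> Domain F" using \<open>-x = -d + of_int (-k) * g\<close> by simp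
        qed
      qed
      hence "F = M" using Mmax MF by blast
      thus False using gF gD D_def by simp
    qed
  qed
  hence "D = G" using DG by blast
  have "\<forall>x\<in>H. \<psi> x = ch x" using MH psi_eq by blast
  thus ?thesis using psi \<open>D = G\<close> by blast
qed

lemma ID_transfer:
  assumes cont: "continuous_on Y f" and img: "f ` Y = X"
    and inv: "\<forall>g\<in>G. \<forall>y\<in>Y. act g y \<in> Y"
    and eq: "\<forall>g\<in>G. \<forall>y\<in>Y. f (act g y) = act g (f y)"
    and ID: "ID_property (top_of_set Y) G act"
  shows "ID_property (top_of_set X) G act"
  unfolding ID_property_def
proof (intro allI impI)
  fix S assume S: "closedin (top_of_set X) S \<and> infinite S \<and> (\<forall>g\<in>G. \<forall>x\<in>S. act g x \<in> S)"
  hence "closedin (top_of_set X) S" by (rule conjunct1)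
  then obtain C where C: "closed C" "S = X \<inter> C" unfolding closedin_closed by blast
  define T where "T = Y \<inter> f -` C"
  have Tc: "closedin (top_of_set Y) T" unfolding T_def using continuous_closedin_preimage[OF cont C(1)] .
  have Ti: "\<forall>g\<in>G. \<forall>y\<in>T. act g y \<in> T"
  proof (intro ballI)
    fix g y assume g: "g \<in> G" and y: "y \<in> T"
    have yY: "y \<in> Y" and fyC: "f y \<in> C" using y unfolding T_def by auto
    have "f y \<in> X" using yY img by blast
    hence "f y \<in> S" using fyC C(2) by blast
    hence "act g (f y) \<in> S" using S g by blast
    moreover have "f (act g y) = act g (f y)" using eq g yY by blast
    ultimately have "f (act g y) \<in> C" using C(2) by simp
    moreover have "act g y \<in> Y" using inv g yY by blast
    ultimately show "act g y \<in> T" unfolding T_def by blast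
  qed
  have "S \<subseteq> f ` T"
  proof
    fix s assume "s \<in> S"
    hence "s \<in> X" "s \<in> C" using C(2) by auto
    then obtain y where "y \<in> Y" "s = f y" using img by blast
    thus "s \<in> f ` T" using \<open>s \<in> C\<close> unfolding T_def by blast
  qed
  hence "infinite T" using S finite_surj[of T S f] by blast
  hence "closedin (top_of_set Y) T \<and> infinite T \<and> (\<forall>g\<in>G. \<forall>x\<in>T. act g x \<in> T)"
    using Tc Ti by blast
  hence "T = topspace (top_of_set Y)" by (rule ID[unfolded ID_property_def, rule_format])
  hence TY: "T = Y" by simp
  have "X \<subseteq> S"
  proof
    fix x assume "x \<in> X"
    then obtain y where "y \<in> Y" "x = f y" using img by blast
    hence "f y \<in> C" using TY unfolding T_def by blast
    thus "x \<in> S" using \<open>x \<in> X\<close> \<open>x = f y\<close> C(2) by blast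
  qed
  moreover have "S \<subseteq> X" using C(2) by blast
  ultimately show "S = topspace (top_of_set X)" by simp
qed

lemma coord_cont: "continuous_on S (\<lambda>x::'a\<Rightarrow>'b::topological_space. x i)"
  by (rule continuous_on_subset[OF continuous_on_product_coordinates]) simp

lemma mk_dual: "subgrp A \<Longrightarrow> is_char A f \<Longrightarrow> (\<lambda>x. if x \<in> A then f x else 1) \<in> dual_group A"
  unfolding dual_group_def mem_Collect_eq
proof (intro conjI ballI allI impI)
  assume A: "subgrp A" and f: "is_char A f"
  fix x assume x: "x \<in> A"
  show "norm (if x \<in> A then f x else 1) = 1" using f x unfolding is_char_def by simp
  fix y assume y: "y \<in> A"
  have "x + y \<in> A" using A x y unfolding subgrp_def by blast
  thus "(if x + y \<in> A then f (x + y) else 1) = (if x \<in> A then f x else 1) * (if y \<in> A then f y else 1)"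
    using f x y unfolding is_char_def by simp
qed simp

lemma dual_is_char: "ch \<in> dual_group A \<Longrightarrow> is_char A ch"
  by (simp add: dual_group_def is_char_def)

lemma dual_out: "ch \<in> dual_group A \<Longrightarrow> x \<notin> A \<Longrightarrow> ch x = 1"
  by (simp add: dual_group_def)

lemma char_mono: "is_char A f \<Longrightarrow> B \<subseteq> A \<Longrightarrow> is_char B f"
  unfolding is_char_def by blast

lemma unit_mem_iff:
  fixes u v x :: complex
  assumes "u * v = 1" "v \<in> R" "u \<in> R" "\<forall>r\<in>R. \<forall>x\<in>A. r * x \<in> A"
  shows "u * x \<in> A \<longleftrightarrow> x \<in> A"
proof
  assume "u * x \<in> A"
  hence "v * (u * x) \<in> A" using assms by blast
  moreover have "v * (u * x) = (u * v) * x" by (simp add: mult_ac)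
  ultimately show "x \<in> A" using assms(1) by simp
qed (use assms in blast)

lemma act_dual:
  fixes u v :: complex
  assumes "u * v = 1" "v \<in> R" "u \<in> R" "\<forall>r\<in>R. \<forall>x\<in>A. r * x \<in> A" "ch \<in> dual_group A"
  shows "dual_act u ch \<in> dual_group A"
proof -
  have m: "u * x \<in> A \<longleftrightarrow> x \<in> A" for x using unit_mem_iff[OF assms(1-4)] .
  have c1: "\<forall>x\<in>A. norm (ch x) = 1" and c2: "\<forall>x\<in>A. \<forall>y\<in>A. ch (x + y) = ch x * ch y"
    and c3: "\<forall>x. x \<notin> A \<longrightarrow> ch x = 1" using assms(5) unfolding dual_group_def by blast+
  show ?thesis
    unfolding dual_group_def dual_act_def mem_Collect_eq
  proof (intro conjI ballI allI impI)
    fix x assume x: "x \<in> A"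
    show "norm (ch (u * x)) = 1" using c1 x m by blast
    fix y assume y: "y \<in> A"
    have "ch (u * x + u * y) = ch (u * x) * ch (u * y)" using c2 x y m by blast
    thus "ch (u * (x + y)) = ch (u * x) * ch (u * y)" by (simp add: distrib_left)
  next
    fix x assume "x \<notin> A"
    thus "ch (u * x) = 1" using c3 m by blast
  qed
qed

theorem proposition4p2:
  fixes K J :: "complex set"
  assumes "number_field K"
    and "is_ideal (ring_of_integers K) J"
    and "J \<noteq> {0}"
  shows "ID_property (subtopology euclidean (dual_group J)) (int_units K) dual_act
     \<longleftrightarrow> ID_property (subtopology euclidean (dual_group (ring_of_integers K)))
            (int_units K) dual_act"
proof -
  define R where "R = ring_of_integers K"
  have Rmem: "x \<in> R \<longleftrightarrow> x \<in> K \<and> algebraic_int x" for x by (simp add: R_def ring_of_integers_def)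
  have K1: "\<forall>x\<in>K. \<forall>y\<in>K. x + y \<in> K \<and> x * y \<in> K" and K2: "\<forall>x\<in>K. - x \<in> K" and K0: "0 \<in> K"
    using assms(1) unfolding number_field_def by blast+
  have RG: "subgrp R"
    unfolding subgrp_def
  proof (intro conjI ballI)
    show "0 \<in> R" using K0 Rmem by simp
    fix x assume x: "x \<in> R"
    show "-x \<in> R" using x K2 Rmem by auto
    fix y assume y: "y \<in> R"
    show "x + y \<in> R" using x y K1 Rmem algebraic_int_plus by auto
  qed
  have Rid: "\<forall>r\<in>R. \<forall>x\<in>R. r * x \<in> R"
  proof (intro ballI)
    fix x y assume x: "x \<in> R" and y: "y \<in> R"
    show "x * y \<in> R" using x y K1 Rmem algebraic_int_times by auto
  qed
  have Jdef: "J \<subseteq> R \<and> 0 \<in> J \<and> (\<forall>x\<in>J. \<forall>y\<in>J. x + y \<in> J) \<and> (\<forall>x\<in>J. - x \<in> J) \<and> (\<forall>r\<in>R. \<forall>x\<in>J. r * x \<in> J)"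
    using assms(2) unfolding is_ideal_def R_def .
  hence JR: "J \<subseteq> R" and Jid: "\<forall>r\<in>R. \<forall>x\<in>J. r * x \<in> J" and JG: "subgrp J"
    unfolding subgrp_def by blast+
  obtain a where a: "a \<in> J" "a \<noteq> 0" using assms(3) JG unfolding subgrp_def by blast
  have aJ: "a * x \<in> J" if "x \<in> R" for x using Jid a(1) that by (metis mult.commute)
  have units: "\<exists>v. u * v = 1 \<and> v \<in> R \<and> u \<in> R" if "u \<in> int_units K" for u
    using that unfolding int_units_def R_def by blast
  have memJ: "u * x \<in> J \<longleftrightarrow> x \<in> J" if "u \<in> int_units K" for u x
    using units[OF that] unit_mem_iff[of u _ R J x] Jid by blast
  have memR: "u * x \<in> R \<longleftrightarrow> x \<in> R" if "u \<in> int_units K" for u x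
    using units[OF that] unit_mem_iff[of u _ R R x] Rid by blast
  have invJ: "\<forall>g\<in>int_units K. \<forall>y\<in>dual_group J. dual_act g y \<in> dual_group J"
    using units act_dual[of _ _ R J] Jid by blast
  have invR: "\<forall>g\<in>int_units K. \<forall>y\<in>dual_group R. dual_act g y \<in> dual_group R"
    using units act_dual[of _ _ R R] Rid by blast
  define rmap :: "(complex \<Rightarrow> complex) \<Rightarrow> (complex \<Rightarrow> complex)" where
    "rmap ch = (\<lambda>x. if x \<in> J then ch x else 1)" for ch
  define pmap :: "(complex \<Rightarrow> complex) \<Rightarrow> (complex \<Rightarrow> complex)" where
    "pmap ch = (\<lambda>x. if x \<in> R then ch (a * x) else 1)" for ch
  have rcont: "continuous_on (dual_group R) rmap"
    unfolding rmap_def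
  proof (intro continuous_on_coordinatewise_then_product)
    fix i show "continuous_on (dual_group R) (\<lambda>x. if i \<in> J then x i else 1)"
      by (cases "i \<in> J") (simp_all add: coord_cont)
  qed
  have pcont: "continuous_on (dual_group J) pmap"
    unfolding pmap_def
  proof (intro continuous_on_coordinatewise_then_product)
    fix i show "continuous_on (dual_group J) (\<lambda>x. if i \<in> R then x (a * i) else 1)"
      by (cases "i \<in> R") (simp_all add: coord_cont)
  qed
  have req: "\<forall>g\<in>int_units K. \<forall>y\<in>dual_group R. rmap (dual_act g y) = dual_act g (rmap y)"
    unfolding rmap_def dual_act_def using memJ by auto
  have peq: "\<forall>g\<in>int_units K. \<forall>y\<in>dual_group J. pmap (dual_act g y) = dual_act g (pmap y)"
    unfolding pmap_def dual_act_def using memR by (auto simp: mult.left_commute)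
  have rimg: "rmap ` dual_group R = dual_group J"
  proof
    show "rmap ` dual_group R \<subseteq> dual_group J"
    proof
      fix f assume "f \<in> rmap ` dual_group R"
      then obtain ch where ch: "ch \<in> dual_group R" "f = rmap ch" by blast
      have "(\<lambda>x. if x \<in> J then ch x else 1) \<in> dual_group J"
        by (rule mk_dual[OF JG char_mono[OF dual_is_char[OF ch(1)] JR]])
      thus "f \<in> dual_group J" using ch(2) unfolding rmap_def by simp
    qed
    show "dual_group J \<subseteq> rmap ` dual_group R"
    proof
      fix \<psi> assume \<psi>: "\<psi> \<in> dual_group J"
      obtain \<phi> where \<phi>: "is_char R \<phi>" "\<forall>x\<in>J. \<phi> x = \<psi> x"
        using char_extend[OF RG JG JR dual_is_char[OF \<psi>]] by blast
      define ch where "ch = (\<lambda>x. if x \<in> R then \<phi> x else 1)"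
      have "ch \<in> dual_group R" unfolding ch_def by (rule mk_dual[OF RG \<phi>(1)])
      moreover have "rmap ch = \<psi>"
      proof
        fix x show "rmap ch x = \<psi> x"
        proof (cases "x \<in> J")
          case True
          hence "x \<in> R" using JR by blast
          thus ?thesis using True \<phi>(2) unfolding rmap_def ch_def by simp
        next
          case False
          thus ?thesis using dual_out[OF \<psi> False] unfolding rmap_def by simp
        qed
      qed
      ultimately show "\<psi> \<in> rmap ` dual_group R" by blast
    qed
  qed
  have pimg: "pmap ` dual_group J = dual_group R"
  proof
    show "pmap ` dual_group J \<subseteq> dual_group R"
    proof
      fix f assume "f \<in> pmap ` dual_group J"
      then obtain \<psi> where \<psi>: "\<psi> \<in> dual_group J" "f = pmap \<psi>" by blast
      have "is_char R (\<lambda>y. \<psi> (a * y))"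
        unfolding is_char_def
      proof (intro conjI ballI)
        fix x assume x: "x \<in> R"
        show "norm (\<psi> (a * x)) = 1" using dual_is_char[OF \<psi>(1)] aJ[OF x] unfolding is_char_def by blast
        fix y assume y: "y \<in> R"
        have "\<psi> (a * x + a * y) = \<psi> (a * x) * \<psi> (a * y)"
          using dual_is_char[OF \<psi>(1)] aJ[OF x] aJ[OF y] unfolding is_char_def by blast
        thus "\<psi> (a * (x + y)) = \<psi> (a * x) * \<psi> (a * y)" by (simp add: distrib_left)
      qed
      from mk_dual[OF RG this] show "f \<in> dual_group R" using \<psi>(2) unfolding pmap_def by simp
    qed
    show "dual_group R \<subseteq> pmap ` dual_group J"
    proof
      fix ch assume ch: "ch \<in> dual_group R"
      define H where "H = (\<lambda>x. a * x) ` R"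
      have HG: "subgrp H"
        unfolding subgrp_def
      proof (intro conjI ballI)
        show "0 \<in> H" using RG unfolding H_def subgrp_def by force
        fix x assume "x \<in> H"
        then obtain x' where x': "x' \<in> R" "x = a * x'" unfolding H_def by blast
        have "-x' \<in> R" using RG x'(1) unfolding subgrp_def by blast
        thus "-x \<in> H" using x' unfolding H_def by force
        fix y assume "y \<in> H"
        then obtain y' where y': "y' \<in> R" "y = a * y'" unfolding H_def by blast
        have "x' + y' \<in> R" using RG x'(1) y'(1) unfolding subgrp_def by blast
        moreover have "x + y = a * (x' + y')" using x' y' by (simp add: distrib_left)
        ultimately show "x + y \<in> H" unfolding H_def by blast
      qed
      have HJ: "H \<subseteq> J" using aJ unfolding H_def by blast
      have "is_char H (\<lambda>y. ch (y / a))"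
        unfolding is_char_def
      proof (intro conjI ballI)
        fix x assume "x \<in> H"
        then obtain x' where x': "x' \<in> R" "x = a * x'" unfolding H_def by blast
        show "norm (ch (x / a)) = 1" using x' a(2) dual_is_char[OF ch] unfolding is_char_def by simp
        fix y assume "y \<in> H"
        then obtain y' where y': "y' \<in> R" "y = a * y'" unfolding H_def by blast
        have "(x + y) / a = x' + y'" using x' y' a(2) by (simp add: field_simps)
        thus "ch ((x + y) / a) = ch (x / a) * ch (y / a)"
          using x' y' a(2) dual_is_char[OF ch] unfolding is_char_def by simp
      qed
      then obtain \<phi> where \<phi>: "is_char J \<phi>" "\<forall>x\<in>H. \<phi> x = ch (x / a)"
        using char_extend[OF JG HG HJ] by blast
      define \<psi> where "\<psi> = (\<lambda>x. if x \<in> J then \<phi> x else 1)"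
      have "\<psi> \<in> dual_group J" unfolding \<psi>_def by (rule mk_dual[OF JG \<phi>(1)])
      moreover have "pmap \<psi> = ch"
      proof
        fix x show "pmap \<psi> x = ch x"
        proof (cases "x \<in> R")
          case True
          hence "a * x \<in> H" unfolding H_def by blast
          hence "a * x \<in> J" "\<phi> (a * x) = ch (a * x / a)" using HJ \<phi>(2) by blast+
          thus ?thesis using True a(2) unfolding pmap_def \<psi>_def by simp
        next
          case False thus ?thesis using dual_out[OF ch False] unfolding pmap_def by simp
        qed
      qed
      ultimately show "ch \<in> pmap ` dual_group J" by blast
    qed
  qed
  show ?thesis
  proof
    assume "ID_property (subtopology euclidean (dual_group J)) (int_units K) dual_act"
    thus "ID_property (subtopology euclidean (dual_group (ring_of_integers K))) (int_units K) dual_act"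
      using ID_transfer[OF pcont pimg invJ peq] by (simp add: R_def)
  next
    assume "ID_property (subtopology euclidean (dual_group (ring_of_integers K))) (int_units K) dual_act"
    thus "ID_property (subtopology euclidean (dual_group J)) (int_units K) dual_act"
      using ID_transfer[OF rcont rimg invR req] by (simp add: R_def)
  qed
qed
end
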